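(* Let $A$ be a non-trivial (i.e. $A\neq\{0\}$) commutative Banach algebra, let $a\in A$, $c\in\mathbb C$, and let $M=cI+M_a$, where $M_a\in L(A)$ is the multiplication operator $M_ab=ab$. Then the operator $M\oplus M$ on $A\oplus A$ is not cyclic.
   Context: A Banach algebra is a complex algebra, possibly without unit, with a complete submultiplicative norm. An operator $T\in L(X)$ on a topological vector space $X$ is cyclic if there is $x\in X$ such that the linear span of $\{T^nx:n\ge 0\}$ is dense in $X$. *)

theory Defs
  imports "HOL-Analysis.Analysis"
begin

text \<open>Together with the type class banach, real_normed_algebra (complete submultiplicative
  norm, possibly without unit) this is a complex Banach algebra.\<close>
definition complex_scale :: "(complex \<Rightarrow> 'a::real_normed_algebra \<Rightarrow> 'a) \<Rightarrow> bool" where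
  "complex_scale sc \<longleftrightarrow>
     (\<forall>x. sc 1 x = x) \<and>
     (\<forall>c d x. sc c (sc d x) = sc (c * d) x) \<and>
     (\<forall>c d x. sc (c + d) x = sc c x + sc d x) \<and>
     (\<forall>c x y. sc c (x + y) = sc c x + sc c y) \<and>
     (\<forall>r x. sc (complex_of_real r) x = scaleR r x) \<and>
     (\<forall>c x. norm (sc c x) = cmod c * norm x) \<and>
     (\<forall>c x y. sc c (x * y) = sc c x * y \<and> sc c (x * y) = x * sc c y)"

definition cyclic_op :: "(complex \<Rightarrow> 'b::{topological_space, comm_monoid_add} \<Rightarrow> 'b) \<Rightarrow> ('b \<Rightarrow> 'b) \<Rightarrow> bool"
  where "cyclic_op sc T \<longleftrightarrow>
    (\<exists>x.
       closure {\<Sum>i<N. sc (p i) ((T ^^ i) x) | N p. True} = UNIV)"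

end

theory Submission
  imports Defs
begin

lemma sc_zero:
  assumes "complex_scale sc" shows "sc d 0 = 0"
proof -
  have "norm (sc d 0) = cmod d * norm (0::'a)" using assms unfolding complex_scale_def by blast
  then show ?thesis by simp
qed

theorem proposition1p4:
  fixes sc :: "complex \<Rightarrow> 'a::{banach, real_normed_algebra, comm_ring} \<Rightarrow> 'a"
    and a :: 'a and c :: complex
  assumes "complex_scale sc"
    and "\<exists>x::'a. x \<noteq> 0"
  shows "\<not> cyclic_op (\<lambda>d (x, y). (sc d x, sc d y))
                      (\<lambda>(x, y). (sc c x + a * x, sc c y + a * y))"
proof
  let ?T = "(\<lambda>(x, y). (sc c x + a * x, sc c y + a * y))"
  let ?S = "\<lambda>d (x, y). (sc d x, sc d y)"
  have one: "\<And>x. sc 1 x = x" and mul: "\<And>c d x. sc c (sc d x) = sc (c * d) x"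
    and addl: "\<And>c d x. sc (c + d) x = sc c x + sc d x"
    and addr: "\<And>c x y. sc c (x + y) = sc c x + sc c y"
    using assms(1) unfolding complex_scale_def by blast+
  have ml: "\<And>c x y. sc c (x * y) = sc c x * y" and mr: "\<And>c x y. sc c (x * y) = x * sc c y"
    using assms(1) unfolding complex_scale_def by blast+
  assume "cyclic_op ?S ?T"
  then obtain x y where cl: "closure {\<Sum>i<N. ?S (p i) ((?T ^^ i) (x,y)) | N p. True} = UNIV"
    unfolding cyclic_op_def by auto
  define F where "F = {(sc \<alpha> x + u * x, sc \<alpha> y + u * y) | \<alpha> u. True}"
  have Tn: "(?T ^^ n) (x,y) \<in> F" for n
  proof (induction n)
    case 0
    have "(x,y) = (sc 1 x + 0 * x, sc 1 y + 0 * y)" by (simp add: one)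
    then show ?case unfolding F_def by (simp only: funpow_0) blast
  next
    case (Suc n)
    then obtain \<alpha> u where e: "(?T ^^ n) (x,y) = (sc \<alpha> x + u * x, sc \<alpha> y + u * y)"
      unfolding F_def by auto
    have g: "sc c (sc \<alpha> z + u * z) + a * (sc \<alpha> z + u * z)
        = sc (c*\<alpha>) z + (sc c u + sc \<alpha> a + a * u) * z" for z
      by (simp add: addr mul distrib_left distrib_right ml[symmetric] mr[symmetric] mult.assoc)
    show ?case unfolding F_def using e g by auto
  qed
  have Fs: "?S d p \<in> F" if hp: "p \<in> F" for d p
  proof -
    obtain \<alpha> u where e: "p = (sc \<alpha> x + u * x, sc \<alpha> y + u * y)" using hp unfolding F_def by blast
    have g: "sc d (sc \<alpha> z + u * z) = sc (d*\<alpha>) z + sc d u * z" for z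
      by (simp add: addr mul ml)
    show ?thesis unfolding F_def using e g by auto
  qed
  have Fa: "p + q \<in> F" if hp: "p \<in> F" and hq: "q \<in> F" for p q
  proof -
    obtain \<alpha> u where e: "p = (sc \<alpha> x + u * x, sc \<alpha> y + u * y)" using hp unfolding F_def by blast
    obtain \<beta> v where f: "q = (sc \<beta> x + v * x, sc \<beta> y + v * y)" using hq unfolding F_def by blast
    have g: "(sc \<alpha> z + u * z) + (sc \<beta> z + v * z) = sc (\<alpha>+\<beta>) z + (u+v) * z" for z
      by (simp add: addl distrib_right)
    show ?thesis unfolding F_def using e f g by auto
  qed
  have F0: "0 \<in> F"
  proof -
    have "(0::'a\<times>'a) = (sc 0 x + 0 * x, sc 0 y + 0 * y)"
      using addl[of 0 0] by (simp add: zero_prod_def)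
    then show ?thesis unfolding F_def by blast
  qed
  have sumF: "(\<Sum>i<N. ?S (p i) ((?T ^^ i) (x,y))) \<in> F" for N p
    by (induction N) (auto simp: F0 Fa Fs Tn simp del: prod.case)
  have spanF: "{\<Sum>i<N. ?S (p i) ((?T ^^ i) (x,y)) | N p. True} \<subseteq> F" using sumF by auto
  have C1: "closed {q::'a\<times>'a. fst q * y = snd q * x}"
    by (intro closed_Collect_eq continuous_intros)
  have "F \<subseteq> {q. fst q * y = snd q * x}"
  proof
    fix q assume "q \<in> F"
    then obtain \<alpha> u where e: "q = (sc \<alpha> x + u * x, sc \<alpha> y + u * y)" unfolding F_def by auto
    have h1: "sc \<alpha> x * y = sc \<alpha> y * x"
      by (metis ml mult.commute)
    have "(sc \<alpha> x + u * x) * y = (sc \<alpha> y + u * y) * x"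
      unfolding distrib_right h1 by (simp add: mult.commute mult.left_commute)
    then show "q \<in> {q. fst q * y = snd q * x}" using e by simp
  qed
  then have "UNIV \<subseteq> {q::'a\<times>'a. fst q * y = snd q * x}"
    using closure_minimal[OF order.trans[OF spanF] C1] cl by auto
  then have U1: "\<And>u v. u * y = v * x"
  proof -
    fix u v assume "UNIV \<subseteq> {q::'a\<times>'a. fst q * y = snd q * x}"
    then have "(u,v) \<in> {q::'a\<times>'a. fst q * y = snd q * x}" by blast
    then show "u * y = v * x" by simp
  qed
  have zx: "\<And>z. z * x = 0" using U1[of 0] by simp
  have zy: "\<And>z. z * y = 0" using U1[of _ 0] by simp
  have Fsimp: "F \<subseteq> {(sc \<alpha> x, sc \<alpha> y) | \<alpha>. True}" unfolding F_def using zx zy by auto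
  show False
  proof (cases "x = 0 \<and> y = 0")
    case True
    have "F \<subseteq> {0}" using Fsimp True sc_zero[OF assms(1)] by (auto simp: zero_prod_def)
    then have "UNIV \<subseteq> {0::'a\<times>'a}"
      using closure_minimal[OF order.trans[OF spanF] closed_singleton] cl by auto
    moreover obtain z::'a where "z \<noteq> 0" using assms(2) by auto
    ultimately show False by (auto simp: zero_prod_def)
  next
    case False
    have C2: "closed {q::'a\<times>'a. norm (fst q) * norm y = norm (snd q) * norm x}"
      by (intro closed_Collect_eq continuous_intros)
    have nrm: "\<And>c z. norm (sc c z) = cmod c * norm z" using assms(1) unfolding complex_scale_def by blast
    have "F \<subseteq> {q::'a\<times>'a. norm (fst q) * norm y = norm (snd q) * norm x}"
      using Fsimp by (auto simp: nrm)
    then have U: "UNIV \<subseteq> {q::'a\<times>'a. norm (fst q) * norm y = norm (snd q) * norm x}"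
      using closure_minimal[OF order.trans[OF spanF] C2] cl by auto
    show False
    proof (cases "x = 0")
      case True
      then have "y \<noteq> 0" using False by auto
      then show False using U True by (auto dest!: subsetD[of _ _ "(y,0)"])
    next
      case False
      then show False using U by (auto dest!: subsetD[of _ _ "(0,x)"])
    qed
  qed
qed

end
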